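(* Let $(W,\odot,\mathbb{1})$ be a monoid and $(M,+,\mathbb{0},\otimes)$ an $\omega$-continuous (left) $W$-module. Then for every $W$-wgcl program $C$, every state $\sigma\in\Sigma$ and every weighting $f\in\mathrm{Wt}=M^\Sigma$, $$\mathrm{wp}[\![C]\!](f)(\sigma)=\sum_{\pi\in\mathrm{TPaths}(\langle C,\sigma\rangle)}\mathrm{wgt}(\pi)\otimes f(\mathrm{last}(\pi)),$$ where $\mathrm{TPaths}(\langle C,\sigma\rangle)$ is the (countable) set of terminating computation paths starting in the configuration $\langle C,\sigma\rangle$.
   Context: A (left) module over a monoid $(W,\odot,\mathbb{1})$ is a commutative monoid $(M,+,\mathbb{0})$ with an action $\otimes\colon W\times M\to M$ such that $(v\odot w)\otimes a=v\otimes(w\otimes a)$, $v\otimes(a+b)=(v\otimes a)+(v\otimes b)$, $\mathbb{1}\otimes a=a$, $v\otimes\mathbb{0}=\mathbb{0}$. The natural order is $a\preceq b$ iff $\exists c\colon a+c=b$. $M$ is $\omega$-continuous if $\preceq$ is a partial order, every increasing $\omega$-chain has a supremum, and addition (in each argument) and each map $a\mapsto w\otimes a$ preserve such suprema. A countable sum $\sum_{i}a_i$ in $M$ is the supremum of its finite partial sums. States, programs: $\Sigma$ is the set of states (maps from variables to values); expressions $E$ evaluate to $E(\sigma)$; guards $\varphi$ are predicates on states. $W$-wgcl programs: $C::= x:=E \mid C;C \mid \mathtt{if}(\varphi)\{C\}\mathtt{else}\{C\} \mid \{C\}\oplus\{C\} \mid \mathtt{weight}\ a\ (a\in W) \mid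 \mathtt{while}(\varphi)\{C\}$. Weightings $\mathrm{Wt}=M^\Sigma$ with pointwise operations and order; $([\varphi]\cdot f)(\sigma)=f(\sigma)$ if $\sigma\models\varphi$ else $\mathbb{0}$; $f[x/E](\sigma)=f(\sigma[x\mapsto E(\sigma)])$. Weakest preweighting: $\mathrm{wp}[\![x:=E]\!](f)=f[x/E]$; $\mathrm{wp}[\![C_1;C_2]\!](f)=\mathrm{wp}[\![C_1]\!](\mathrm{wp}[\![C_2]\!](f))$; $\mathrm{wp}[\![\mathtt{if}(\varphi)\{C_1\}\mathtt{else}\{C_2\}]\!](f)=[\varphi]\cdot\mathrm{wp}[\![C_1]\!](f)+[\neg\varphi]\cdot\mathrm{wp}[\![C_2]\!](f)$; $\mathrm{wp}[\![\{C_1\}\oplus\{C_2\}]\!](f)=\mathrm{wp}[\![C_1]\!](f)+\mathrm{wp}[\![C_2]\!](f)$; $\mathrm{wp}[\![\mathtt{weight}\ a]\!](f)=a\otimes f$; $\mathrm{wp}[\![\mathtt{while}(\varphi)\{C'\}]\!](f)$ is the least fixed point of $X\mapsto[\neg\varphi]\cdot f+[\varphi]\cdot\mathrm{wp}[\![C']\!](X)$. Operational semantics: configurations are $\langle C,\sigma\rangle$ for a program $C$ and $\langle\downarrow,\sigma\rangle$ (terminated). Weighted transitions $\xrightarrow{w}$ ($w\in W$): $\langle x:=E,\sigma\rangle\xrightarrow{\mathbb 1}\langle\downarrow,\sigma[x\mapsto E(\sigma)]\rangle$; $\langle\mathtt{weight}\ a,\sigma\rangle\xrightarrow{a}\langle\downarrow,\sigma\rangle$;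 $\langle\{C_1\}\oplus\{C_2\},\sigma\rangle$ has two distinct transitions (a left and a right one, counted separately even if their targets coincide) $\xrightarrow{\mathbb 1}\langle C_1,\sigma\rangle$ and $\xrightarrow{\mathbb 1}\langle C_2,\sigma\rangle$; $\langle\mathtt{if}(\varphi)\{C_1\}\mathtt{else}\{C_2\},\sigma\rangle\xrightarrow{\mathbb 1}\langle C_1,\sigma\rangle$ if $\sigma\models\varphi$ and $\xrightarrow{\mathbb 1}\langle C_2,\sigma\rangle$ otherwise; $\langle\mathtt{while}(\varphi)\{C\},\sigma\rangle\xrightarrow{\mathbb 1}\langle C;\mathtt{while}(\varphi)\{C\},\sigma\rangle$ if $\sigma\models\varphi$ and $\xrightarrow{\mathbb 1}\langle\downarrow,\sigma\rangle$ otherwise; if $\langle C_1,\sigma\rangle\xrightarrow{w}\langle C_1',\sigma'\rangle$ then $\langle C_1;C_2,\sigma\rangle\xrightarrow{w}\langle C_1';C_2,\sigma'\rangle$, and if $\langle C_1,\sigma\rangle\xrightarrow{w}\langle\downarrow,\sigma'\rangle$ then $\langle C_1;C_2,\sigma\rangle\xrightarrow{w}\langle C_2,\sigma'\rangle$. Terminated configurations have no outgoing transitions. A computation path is a finite sequence of consecutive transitions; its weight $\mathrm{wgt}(\pi)=w_1\odot w_2\odot\cdots\odot w_n$ is the product of its transition weights in order (the empty product is $\mathbb 1$). A path is terminating if it ends in a configuration $\langle\downarrow,\tau\rangle$, and then $\mathrm{last}(\pi)=\tau$. *)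

theory Defs
  imports Main
begin

definition is_module :: "('w::monoid_mult \<Rightarrow> 'm::comm_monoid_add \<Rightarrow> 'm) \<Rightarrow> bool" where
  "is_module act \<longleftrightarrow>
     (\<forall>v w a. act (v * w) a = act v (act w a)) \<and>
     (\<forall>v a b. act v (a + b) = act v a + act v b) \<and>
     (\<forall>a. act 1 a = a) \<and>
     (\<forall>v. act v 0 = 0)"

definition nle :: "'m::comm_monoid_add \<Rightarrow> 'm \<Rightarrow> bool" where
  "nle a b \<longleftrightarrow> (\<exists>c. a + c = b)"

definition is_lub :: "'m::comm_monoid_add set \<Rightarrow> 'm \<Rightarrow> bool" where
  "is_lub S s \<longleftrightarrow> (\<forall>x\<in>S. nle x s) \<and> (\<forall>u. (\<forall>x\<in>S. nle x u) \<longrightarrow> nle s u)"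

definition omega_chain :: "(nat \<Rightarrow> 'm::comm_monoid_add) \<Rightarrow> bool" where
  "omega_chain a \<longleftrightarrow> (\<forall>i. nle (a i) (a (Suc i)))"

definition omega_continuous :: "('w::monoid_mult \<Rightarrow> 'm::comm_monoid_add \<Rightarrow> 'm) \<Rightarrow> bool" where
  "omega_continuous act \<longleftrightarrow>
     (\<forall>a b::'m. nle a b \<and> nle b a \<longrightarrow> a = b) \<and>
     (\<forall>a::nat \<Rightarrow> 'm. omega_chain a \<longrightarrow> (\<exists>s. is_lub (range a) s)) \<and>
     (\<forall>(a::nat \<Rightarrow> 'm) s b. omega_chain a \<and> is_lub (range a) s \<longrightarrow>
          is_lub (range (\<lambda>i. a i + b)) (s + b) \<and>
          is_lub (range (\<lambda>i. b + a i)) (b + s)) \<and>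
     (\<forall>a s w. omega_chain a \<and> is_lub (range a) s \<longrightarrow>
          is_lub (range (\<lambda>i. act w (a i))) (act w s))"

text \<open>Countable sum: supremum (w.r.t. the natural order) of all finite partial sums.
  has_wsum g I s means the sum of g over I exists and equals s.\<close>
definition has_wsum :: "('i \<Rightarrow> 'm::comm_monoid_add) \<Rightarrow> 'i set \<Rightarrow> 'm \<Rightarrow> bool" where
  "has_wsum g I s \<longleftrightarrow> is_lub {sum g F | F. finite F \<and> F \<subseteq> I} s"

type_synonym ('v, 'val) state = "'v \<Rightarrow> 'val"

datatype ('v, 'val, 'w) prog =
    Assign 'v "('v, 'val) state \<Rightarrow> 'val"
  | Seq "('v, 'val, 'w) prog" "('v, 'val, 'w) prog"
  | If "('v, 'val) state \<Rightarrow> bool" "('v, 'val, 'w) prog" "('v, 'val, 'w) prog"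
  | Choice "('v, 'val, 'w) prog" "('v, 'val, 'w) prog"
  | Weight 'w
  | While "('v, 'val) state \<Rightarrow> bool" "('v, 'val, 'w) prog"

definition nlfp :: "(('s \<Rightarrow> 'm::comm_monoid_add) \<Rightarrow> ('s \<Rightarrow> 'm)) \<Rightarrow> ('s \<Rightarrow> 'm)" where
  "nlfp \<Phi> = (THE X. \<Phi> X = X \<and> (\<forall>Y. \<Phi> Y = Y \<longrightarrow> (\<forall>s. nle (X s) (Y s))))"

definition guard :: "('s \<Rightarrow> bool) \<Rightarrow> ('s \<Rightarrow> 'm::comm_monoid_add) \<Rightarrow> ('s \<Rightarrow> 'm)" where
  "guard \<phi> f = (\<lambda>s. if \<phi> s then f s else 0)"

primrec wp :: "('w::monoid_mult \<Rightarrow> 'm::comm_monoid_add \<Rightarrow> 'm) \<Rightarrow> ('v, 'val, 'w) prog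
      \<Rightarrow> (('v, 'val) state \<Rightarrow> 'm) \<Rightarrow> (('v, 'val) state \<Rightarrow> 'm)" where
  "wp act (Assign x E) f = (\<lambda>\<sigma>. f (\<sigma>(x := E \<sigma>)))"
| "wp act (Seq C1 C2) f = wp act C1 (wp act C2 f)"
| "wp act (If \<phi> C1 C2) f =
     (\<lambda>\<sigma>. guard \<phi> (wp act C1 f) \<sigma> + guard (\<lambda>s. \<not> \<phi> s) (wp act C2 f) \<sigma>)"
| "wp act (Choice C1 C2) f = (\<lambda>\<sigma>. wp act C1 f \<sigma> + wp act C2 f \<sigma>)"
| "wp act (Weight a) f = (\<lambda>\<sigma>. act a (f \<sigma>))"
| "wp act (While \<phi> C) f =
     nlfp (\<lambda>X \<sigma>. guard (\<lambda>s. \<not> \<phi> s) f \<sigma> + guard \<phi> (wp act C X) \<sigma>)"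

datatype ('v, 'val, 'w) conf =
    Conf "('v, 'val, 'w) prog" "('v, 'val) state"
  | Term "('v, 'val) state"

text \<open>Transition tags: the left and right transitions of a choice are tagged L and R
  so that they are counted separately even if their targets coincide; all other
  transitions are tagged N (inherited through sequential composition).\<close>
datatype tag = L | R | N

inductive step :: "('v, 'val, 'w::monoid_mult) conf \<Rightarrow> tag \<Rightarrow> 'w \<Rightarrow> ('v, 'val, 'w) conf \<Rightarrow> bool" where
  step_assign: "step (Conf (Assign x E) \<sigma>) N 1 (Term (\<sigma>(x := E \<sigma>)))"
| step_weight: "step (Conf (Weight a) \<sigma>) N a (Term \<sigma>)"
| step_choiceL: "step (Conf (Choice C1 C2) \<sigma>) L 1 (Conf C1 \<sigma>)"
| step_choiceR: "step (Conf (Choice C1 C2) \<sigma>) R 1 (Conf C2 \<sigma>)"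
| step_ifT: "\<phi> \<sigma> \<Longrightarrow> step (Conf (If \<phi> C1 C2) \<sigma>) N 1 (Conf C1 \<sigma>)"
| step_ifF: "\<not> \<phi> \<sigma> \<Longrightarrow> step (Conf (If \<phi> C1 C2) \<sigma>) N 1 (Conf C2 \<sigma>)"
| step_whileT: "\<phi> \<sigma> \<Longrightarrow> step (Conf (While \<phi> C) \<sigma>) N 1 (Conf (Seq C (While \<phi> C)) \<sigma>)"
| step_whileF: "\<not> \<phi> \<sigma> \<Longrightarrow> step (Conf (While \<phi> C) \<sigma>) N 1 (Term \<sigma>)"
| step_seq1: "step (Conf C1 \<sigma>) d w (Conf C1' \<sigma>') \<Longrightarrow>
     step (Conf (Seq C1 C2) \<sigma>) d w (Conf (Seq C1' C2) \<sigma>')"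
| step_seq2: "step (Conf C1 \<sigma>) d w (Term \<sigma>') \<Longrightarrow>
     step (Conf (Seq C1 C2) \<sigma>) d w (Conf C2 \<sigma>')"

text \<open>A computation path from a start configuration c is the list of its transitions,
  each given by (tag, weight, target configuration).\<close>
type_synonym ('v, 'val, 'w) path = "(tag \<times> 'w \<times> ('v, 'val, 'w) conf) list"

fun is_path :: "('v, 'val, 'w::monoid_mult) conf \<Rightarrow> ('v, 'val, 'w) path \<Rightarrow> bool" where
  "is_path c [] = True"
| "is_path c ((d, w, c') # ts) = (step c d w c' \<and> is_path c' ts)"

fun end_conf :: "('v, 'val, 'w) conf \<Rightarrow> ('v, 'val, 'w) path \<Rightarrow> ('v, 'val, 'w) conf" where
  "end_conf c [] = c"
| "end_conf c ((d, w, c') # ts) = end_conf c' ts"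

definition wgt :: "('v, 'val, 'w::monoid_mult) path \<Rightarrow> 'w" where
  "wgt ts = prod_list (map (\<lambda>(d, w, c'). w) ts)"

definition tpaths :: "('v, 'val, 'w::monoid_mult) conf \<Rightarrow> ('v, 'val, 'w) path set" where
  "tpaths c = {ts. is_path c ts \<and> (\<exists>\<tau>. end_conf c ts = Term \<tau>)}"

fun conf_state :: "('v, 'val, 'w) conf \<Rightarrow> ('v, 'val) state" where
  "conf_state (Conf C \<sigma>) = \<sigma>"
| "conf_state (Term \<tau>) = \<tau>"

definition last_state :: "('v, 'val, 'w) conf \<Rightarrow> ('v, 'val, 'w) path \<Rightarrow> ('v, 'val) state" where
  "last_state c ts = conf_state (end_conf c ts)"

end

theory Submission
  imports Defs "HOL-Library.Countable_Set"
begin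

lemma nle_refl: "nle a a" unfolding nle_def by (rule exI[of _ 0]) simp
lemma nle_trans: "nle a b \<Longrightarrow> nle b c \<Longrightarrow> nle a c"
  unfolding nle_def by (metis add.assoc)
lemma nle_zero: "nle 0 a" unfolding nle_def by simp
lemma nle_add_mono: "nle a b \<Longrightarrow> nle c d \<Longrightarrow> nle (a + c) (b + d)"
  unfolding nle_def by (metis add.assoc add.commute)
lemma nle_add_right: "nle a (a + b)" unfolding nle_def by blast

lemma nle_sum_mono: "(\<And>i. i \<in> K \<Longrightarrow> nle (f i) (g i)) \<Longrightarrow> nle (sum f K) (sum g K)"
proof (induction K rule: infinite_finite_induct)
  case (infinite A) then show ?case by (simp add: nle_refl)
next
  case empty then show ?case by (simp add: nle_refl)
next
  case (insert x F) then show ?case by (simp add: nle_add_mono)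
qed

lemma nle_sum_subset: "finite G \<Longrightarrow> F \<subseteq> G \<Longrightarrow> nle (sum g F) (sum g G)"
  by (metis nle_add_right sum.subset_diff add.commute)

lemma is_lub_upper: "is_lub S s \<Longrightarrow> x \<in> S \<Longrightarrow> nle x s"
  unfolding is_lub_def by blast
lemma is_lub_least: "is_lub S s \<Longrightarrow> (\<And>x. x \<in> S \<Longrightarrow> nle x u) \<Longrightarrow> nle s u"
  unfolding is_lub_def by blast

lemma is_lub_cofinal:
  assumes "\<And>x. x \<in> S \<Longrightarrow> \<exists>y\<in>T. nle x y" "\<And>y. y \<in> T \<Longrightarrow> \<exists>x\<in>S. nle y x"
  shows "is_lub S s \<longleftrightarrow> is_lub T s"
  using assms unfolding is_lub_def by (meson nle_trans)

lemma is_lub_single: "is_lub {a} a" unfolding is_lub_def by (simp add: nle_refl)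

lemma double_lub:
  fixes c :: "nat \<Rightarrow> nat \<Rightarrow> 'm::comm_monoid_add"
  assumes mono: "\<And>m m' n n'. m \<le> m' \<Longrightarrow> n \<le> n' \<Longrightarrow> nle (c m n) (c m' n')"
    and inner: "\<And>m. is_lub (range (c m)) (t m)"
    and outer: "is_lub (range t) T"
  shows "is_lub (range (\<lambda>n. c n n)) T"
  unfolding is_lub_def
proof safe
  fix n show "nle (c n n) T"
    using is_lub_upper[OF inner[of n]] is_lub_upper[OF outer] by (meson nle_trans rangeI)
next
  fix u assume u: "\<forall>x\<in>range (\<lambda>n. c n n). nle x u"
  have "nle (t m) u" for m
  proof (rule is_lub_least[OF inner])
    fix x assume "x \<in> range (c m)"
    then obtain n where "x = c m n" by auto
    moreover have "nle (c m n) (c (max m n) (max m n))" by (rule mono) auto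
    ultimately show "nle x u" using u by (meson nle_trans rangeI)
  qed
  then show "nle T u" using is_lub_least[OF outer] by auto
qed

lemma ochain_mono: assumes "omega_chain a" "m \<le> n" shows "nle (a m) (a n)"
  using assms(2)
proof (induction n rule: dec_induct)
  case base then show ?case by (rule nle_refl)
next
  case (step n) then show ?case using assms(1) unfolding omega_chain_def by (meson nle_trans)
qed

lemma mono_chain: "(\<And>m n. m \<le> n \<Longrightarrow> nle (a m) (a n)) \<Longrightarrow> omega_chain a"
  unfolding omega_chain_def by simp



locale wmod =
  fixes act :: "'w::monoid_mult \<Rightarrow> 'm::comm_monoid_add \<Rightarrow> 'm"
  assumes module: "is_module act" and oc: "omega_continuous act"
begin

lemma antisym: "nle a b \<Longrightarrow> nle b a \<Longrightarrow> a = (b::'m)"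
  using oc unfolding omega_continuous_def by blast

lemma lub_exists: "omega_chain (a :: nat \<Rightarrow> 'm) \<Longrightarrow> \<exists>s. is_lub (range a) s"
  using oc unfolding omega_continuous_def by blast

lemma lub_add_left: "omega_chain (a :: nat \<Rightarrow> 'm) \<Longrightarrow> is_lub (range a) s \<Longrightarrow>
    is_lub (range (\<lambda>i. a i + b)) (s + b)"
  using oc unfolding omega_continuous_def by blast

lemma lub_add_right: "omega_chain (a :: nat \<Rightarrow> 'm) \<Longrightarrow> is_lub (range a) s \<Longrightarrow>
    is_lub (range (\<lambda>i. b + a i)) (b + s)"
  using oc unfolding omega_continuous_def by blast

lemma lub_act: "omega_chain (a :: nat \<Rightarrow> 'm) \<Longrightarrow> is_lub (range a) s \<Longrightarrow>
    is_lub (range (\<lambda>i. act w (a i))) (act w s)"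
  using oc unfolding omega_continuous_def by blast

lemma act_mult: "act (v * w) a = act v (act w a)"
  using module unfolding is_module_def by blast
lemma act_add: "act v (a + b) = act v a + act v b"
  using module unfolding is_module_def by blast
lemma act_one: "act 1 a = a"
  using module unfolding is_module_def by blast
lemma act_zero: "act v 0 = 0"
  using module unfolding is_module_def by blast

lemma act_mono: "nle a b \<Longrightarrow> nle (act w a) (act w b)"
  unfolding nle_def by (metis act_add)

lemma act_sum: "act w (sum g K) = (\<Sum>i\<in>K. act w (g i))"
  by (induction K rule: infinite_finite_induct) (auto simp: act_zero act_add)

lemma lub_unique: "is_lub S s \<Longrightarrow> is_lub S t \<Longrightarrow> s = (t::'m)"
  unfolding is_lub_def by (meson antisym)

lemma diag_add:
  fixes a b :: "nat \<Rightarrow> 'm"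
  assumes ma: "\<And>m n. m \<le> n \<Longrightarrow> nle (a m) (a n)" and mb: "\<And>m n. m \<le> n \<Longrightarrow> nle (b m) (b n)"
    and la: "is_lub (range a) sa" and lb: "is_lub (range b) sb"
  shows "is_lub (range (\<lambda>n. a n + b n)) (sa + sb)"
proof (rule double_lub[where c = "\<lambda>m n. a m + b n" and t = "\<lambda>m. a m + sb"])
  show "nle (a m + b n) (a m' + b n')" if "m \<le> m'" "n \<le> n'" for m m' n n'
    using that ma mb by (simp add: nle_add_mono)
  show "is_lub (range (\<lambda>n. a m + b n)) (a m + sb)" for m
    by (rule lub_add_right[OF mono_chain[OF mb] lb])
  show "is_lub (range (\<lambda>m. a m + sb)) (sa + sb)"
    by (rule lub_add_left[OF mono_chain[OF ma] la])
qed

lemma finite_sum_lub: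
  fixes a :: "'i \<Rightarrow> nat \<Rightarrow> 'm"
  assumes "finite K"
    and "\<And>i m n. i \<in> K \<Longrightarrow> m \<le> n \<Longrightarrow> nle (a i m) (a i n)"
    and "\<And>i. i \<in> K \<Longrightarrow> is_lub (range (a i)) (s i)"
  shows "is_lub (range (\<lambda>n. \<Sum>i\<in>K. a i n)) (\<Sum>i\<in>K. s i)"
  using assms
proof (induction K rule: finite_induct)
  case empty
  then show ?case using is_lub_single by simp
next
  case (insert k K)
  have "is_lub (range (\<lambda>n. a k n + (\<Sum>i\<in>K. a i n))) (s k + (\<Sum>i\<in>K. s i))"
    by (rule diag_add) (use insert in \<open>auto intro!: nle_sum_mono\<close>)
  then show ?case using insert by simp
qed

definition exh :: "'i set \<Rightarrow> (nat \<Rightarrow> 'i set) \<Rightarrow> bool" where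
  "exh I E \<longleftrightarrow> (\<forall>n. finite (E n) \<and> E n \<subseteq> I) \<and> (\<forall>m n. m \<le> n \<longrightarrow> E m \<subseteq> E n) \<and>
     (\<forall>x\<in>I. \<exists>n. x \<in> E n)"

lemma exh_finite: "exh I E \<Longrightarrow> finite (E n)" unfolding exh_def by simp
lemma exh_sub: "exh I E \<Longrightarrow> E n \<subseteq> I" unfolding exh_def by simp
lemma exh_mono: "exh I E \<Longrightarrow> m \<le> n \<Longrightarrow> E m \<subseteq> E n" unfolding exh_def by simp
lemma exh_in: "exh I E \<Longrightarrow> x \<in> I \<Longrightarrow> \<exists>n. x \<in> E n" unfolding exh_def by simp
lemma exhI: "(\<And>n. finite (E n)) \<Longrightarrow> (\<And>n. E n \<subseteq> I) \<Longrightarrow> (\<And>m n. m \<le> n \<Longrightarrow> E m \<subseteq> E n)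
   \<Longrightarrow> (\<And>x. x \<in> I \<Longrightarrow> \<exists>n. x \<in> E n) \<Longrightarrow> exh I E" unfolding exh_def by simp

lemma exh_exists: "countable I \<Longrightarrow> \<exists>E. exh I E"
proof (cases "I = {}")
  case True then show ?thesis by (intro exI[of _ "\<lambda>_. {}"]) (simp add: exh_def)
next
  case False
  assume c: "countable I"
  define E where "E n = from_nat_into I ` {..<n}" for n
  have "finite (E n)" for n unfolding E_def by simp
  moreover have "E n \<subseteq> I" for n unfolding E_def using from_nat_into[OF False] by blast
  moreover have "E m \<subseteq> E n" if "m \<le> n" for m n unfolding E_def using that by auto
  moreover have "\<exists>n. x \<in> E n" if "x \<in> I" for x
  proof
    have "from_nat_into I (to_nat_on I x) = x" using c that by (rule from_nat_into_to_nat_on)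
    then show "x \<in> E (Suc (to_nat_on I x))" unfolding E_def
      by (intro rev_image_eqI[of "to_nat_on I x"]) auto
  qed
  ultimately have "exh I E" unfolding exh_def by blast
  then show ?thesis by blast
qed

lemma exh_cover: assumes e: "exh I E" and "finite F" "F \<subseteq> I" shows "\<exists>n. F \<subseteq> E n"
  using assms(2,3)
proof (induction F rule: finite_induct)
  case empty then show ?case by simp
next
  case (insert x F)
  then obtain n1 where n1: "F \<subseteq> E n1" by auto
  obtain n2 where n2: "x \<in> E n2" using insert(4) exh_in[OF e] by blast
  have "E n1 \<subseteq> E (max n1 n2)" "E n2 \<subseteq> E (max n1 n2)" using exh_mono[OF e] by auto
  then show ?case using n1 n2 by blast
qed


lemma exh_has_wsum: "exh I E \<Longrightarrow> has_wsum g I s \<longleftrightarrow> is_lub (range (\<lambda>n. sum g (E n))) s"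
  unfolding has_wsum_def
proof (rule is_lub_cofinal)
  fix x assume e: "exh I E" and "x \<in> {sum g F |F. finite F \<and> F \<subseteq> I}"
  then obtain F where F: "x = sum g F" "finite F" "F \<subseteq> I" by auto
  then obtain n where "F \<subseteq> E n" using exh_cover[OF e] by blast
  moreover have "finite (E n)" using exh_finite[OF e] .
  ultimately have "nle x (sum g (E n))" using F(1) nle_sum_subset by metis
  then show "\<exists>y\<in>range (\<lambda>n. sum g (E n)). nle x y" by blast
next
  fix y assume e: "exh I E" and "y \<in> range (\<lambda>n. sum g (E n))"
  then obtain n where n: "y = sum g (E n)" by auto
  have "sum g (E n) \<in> {sum g F |F. finite F \<and> F \<subseteq> I}" using exh_finite[OF e] exh_sub[OF e] by blast
  then show "\<exists>x\<in>{sum g F |F. finite F \<and> F \<subseteq> I}. nle y x"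
    using n nle_refl by blast
qed

lemma exh_mono_sum: "exh I E \<Longrightarrow> m \<le> n \<Longrightarrow> nle (sum g (E m)) (sum g (E n))"
  by (simp add: nle_sum_subset exh_finite exh_mono)

lemma has_wsum_exists: "countable I \<Longrightarrow> \<exists>s::'m. has_wsum g I s"
proof -
  assume "countable I"
  then obtain E where e: "exh I E" using exh_exists by blast
  have "omega_chain (\<lambda>n. sum g (E n))" by (rule mono_chain) (rule exh_mono_sum[OF e])
  then obtain s where "is_lub (range (\<lambda>n. sum g (E n))) s" using lub_exists by blast
  then show ?thesis using exh_has_wsum[OF e] by blast
qed

lemma has_wsum_unique: "has_wsum g I (s::'m) \<Longrightarrow> has_wsum g I t \<Longrightarrow> s = t"
  unfolding has_wsum_def by (rule lub_unique)

lemma has_wsum_upper: "has_wsum g I s \<Longrightarrow> finite F \<Longrightarrow> F \<subseteq> I \<Longrightarrow> nle (sum g F) s"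
  unfolding has_wsum_def by (erule is_lub_upper) blast

lemma has_wsum_least: "(\<And>F. finite F \<Longrightarrow> F \<subseteq> I \<Longrightarrow> nle (sum g F) u) \<Longrightarrow> has_wsum g I s \<Longrightarrow> nle s u"
  unfolding has_wsum_def by (erule is_lub_least) blast

lemma has_wsum_cong: "(\<And>i. i \<in> I \<Longrightarrow> g i = h i) \<Longrightarrow> has_wsum g I s \<longleftrightarrow> has_wsum h I s"
proof -
  assume a: "\<And>i. i \<in> I \<Longrightarrow> g i = h i"
  have "{sum g F |F. finite F \<and> F \<subseteq> I} = {sum h F |F. finite F \<and> F \<subseteq> I}"
  proof -
    have eq: "sum g F = sum h F" if "F \<subseteq> I" for F using a that by (intro sum.cong) auto
    show ?thesis
    proof (intro Collect_cong iffI)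
      fix x assume "\<exists>F. x = sum g F \<and> finite F \<and> F \<subseteq> I"
      then obtain F where "x = sum g F" "finite F" "F \<subseteq> I" by blast
      then show "\<exists>F. x = sum h F \<and> finite F \<and> F \<subseteq> I" using eq by blast
    next
      fix x assume "\<exists>F. x = sum h F \<and> finite F \<and> F \<subseteq> I"
      then obtain F where "x = sum h F" "finite F" "F \<subseteq> I" by blast
      then show "\<exists>F. x = sum g F \<and> finite F \<and> F \<subseteq> I" using eq by metis
    qed
  qed
  then show ?thesis unfolding has_wsum_def by simp
qed

lemma has_wsum_single: "has_wsum g {x} (g x)"
  unfolding has_wsum_def is_lub_def
proof safe
  fix F :: "'a set" assume "F \<subseteq> {x}"
  then have "F = {} \<or> F = {x}" by auto
  then show "nle (sum g F) (g x)" by (auto simp: nle_zero nle_refl)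
next
  fix u assume "\<forall>y\<in>{sum g F |F. finite F \<and> F \<subseteq> {x}}. nle y u"
  moreover have "g x \<in> {sum g F |F. finite F \<and> F \<subseteq> {x}}"
    by (rule CollectI, rule exI[of _ "{x}"]) simp
  ultimately show "nle (g x) u" by blast
qed

lemma has_wsum_reindex: "inj_on h A \<Longrightarrow> has_wsum g (h ` A) s \<longleftrightarrow> has_wsum (g \<circ> h) A s"
proof -
  assume inj: "inj_on h A"
  have "{sum g F |F. finite F \<and> F \<subseteq> h ` A} = {sum (g \<circ> h) F |F. finite F \<and> F \<subseteq> A}"
  proof safe
    fix F assume "finite F" "F \<subseteq> h ` A"
    then obtain G where G: "G \<subseteq> A" "finite G" "F = h ` G" by (meson finite_subset_image)
    then have "sum g F = sum (g \<circ> h) G" using inj by (metis inj_on_subset sum.reindex)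
    then show "\<exists>G. sum g F = sum (g \<circ> h) G \<and> finite G \<and> G \<subseteq> A" using G by blast
  next
    fix G assume G: "finite G" "G \<subseteq> A"
    then have "sum (g \<circ> h) G = sum g (h ` G)" using inj by (metis inj_on_subset sum.reindex)
    then show "\<exists>F. sum (g \<circ> h) G = sum g F \<and> finite F \<and> F \<subseteq> h ` A" using G by blast
  qed
  then show ?thesis unfolding has_wsum_def by simp
qed

lemma has_wsum_union:
  fixes g :: "'i \<Rightarrow> 'm"
  assumes "countable A" "countable B" "A \<inter> B = {}" "has_wsum g A a" "has_wsum g B b"
  shows "has_wsum g (A \<union> B) (a + b)"
proof -
  obtain EA where ea: "exh A EA" using assms(1) exh_exists by blast
  obtain EB where eb: "exh B EB" using assms(2) exh_exists by blast
  have e: "exh (A \<union> B) (\<lambda>n. EA n \<union> EB n)"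
  proof (rule exhI)
    fix n
    show "finite (EA n \<union> EB n)" using exh_finite[OF ea] exh_finite[OF eb] by simp
    show "EA n \<union> EB n \<subseteq> A \<union> B" using exh_sub[OF ea] exh_sub[OF eb] by (rule Un_mono)
  next
    fix m n :: nat assume mn: "m \<le> n"
    show "EA m \<union> EB m \<subseteq> EA n \<union> EB n" using exh_mono[OF ea mn] exh_mono[OF eb mn] by (rule Un_mono)
  next
    fix x assume "x \<in> A \<union> B"
    then show "\<exists>n. x \<in> EA n \<union> EB n"
    proof
      assume "x \<in> A" then obtain n where "x \<in> EA n" using exh_in[OF ea] by blast
      then show ?thesis by blast
    next
      assume "x \<in> B" then obtain n where "x \<in> EB n" using exh_in[OF eb] by blast
      then show ?thesis by blast
    qed
  qed
  have "is_lub (range (\<lambda>n. sum g (EA n) + sum g (EB n))) (a + b)"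
  proof (rule diag_add[where a="\<lambda>n. sum g (EA n)" and b = "\<lambda>n. sum g (EB n)"])
    show "nle (sum g (EA m)) (sum g (EA n))" if "m \<le> n" for m n using exh_mono_sum[OF ea that] .
    show "nle (sum g (EB m)) (sum g (EB n))" if "m \<le> n" for m n using exh_mono_sum[OF eb that] .
    show "is_lub (range (\<lambda>n. sum g (EA n))) a" by (rule exh_has_wsum[OF ea, THEN iffD1, OF assms(4)])
    show "is_lub (range (\<lambda>n. sum g (EB n))) b" by (rule exh_has_wsum[OF eb, THEN iffD1, OF assms(5)])
  qed
  moreover have "sum g (EA n \<union> EB n) = sum g (EA n) + sum g (EB n)" for n
  proof (rule sum.union_disjoint)
    show "finite (EA n)" "finite (EB n)" using exh_finite[OF ea] exh_finite[OF eb] .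
    have "EA n \<subseteq> A" "EB n \<subseteq> B" using exh_sub[OF ea] exh_sub[OF eb] .
    then show "EA n \<inter> EB n = {}" using assms(3) by blast
  qed
  ultimately show ?thesis unfolding exh_has_wsum[OF e] by simp
qed

lemma has_wsum_act:
  fixes g :: "'i \<Rightarrow> 'm"
  assumes "countable I" "has_wsum g I s"
  shows "has_wsum (\<lambda>i. act w (g i)) I (act w s)"
proof -
  obtain E where e: "exh I E" using assms(1) exh_exists by blast
  have ch: "omega_chain (\<lambda>n. sum g (E n))" by (rule mono_chain) (rule exh_mono_sum[OF e])
  have "is_lub (range (\<lambda>n. sum g (E n))) s" by (rule exh_has_wsum[OF e, THEN iffD1, OF assms(2)])
  from lub_act[OF ch this]
  have "is_lub (range (\<lambda>n. act w (sum g (E n)))) (act w s)" .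
  then show ?thesis by (subst exh_has_wsum[OF e]) (simp add: act_sum)
qed

lemma has_wsum_Sigma:
  fixes g :: "'i \<Rightarrow> 'j \<Rightarrow> 'm"
  assumes cI: "countable I" and cJ: "\<And>i. i \<in> I \<Longrightarrow> countable (J i)"
    and inner: "\<And>i. i \<in> I \<Longrightarrow> has_wsum (g i) (J i) (s i)"
    and outer: "has_wsum s I t"
  shows "has_wsum (\<lambda>p. g (fst p) (snd p)) (Sigma I J) t"
proof -
  obtain EI where eI: "exh I EI" using cI exh_exists by blast
  have "\<forall>i\<in>I. \<exists>E. exh (J i) E" using cJ exh_exists by blast
  then obtain EJ where eJ: "\<And>i. i \<in> I \<Longrightarrow> exh (J i) (EJ i)" by (metis bchoice)
  define G where "G n = Sigma (EI n) (\<lambda>i. EJ i n)" for n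
  have eIs: "finite (EI n)" "EI n \<subseteq> I" "m \<le> n \<Longrightarrow> EI m \<subseteq> EI n" for m n
    using exh_finite[OF eI] exh_sub[OF eI] exh_mono[OF eI] by auto
  have eJs: "i \<in> I \<Longrightarrow> finite (EJ i n)" "i \<in> I \<Longrightarrow> EJ i n \<subseteq> J i"
    "i \<in> I \<Longrightarrow> m \<le> n \<Longrightarrow> EJ i m \<subseteq> EJ i n" for i m n
    using exh_finite[OF eJ] exh_sub[OF eJ] exh_mono[OF eJ] by auto
  have eG: "exh (Sigma I J) G"
  proof (rule exhI)
    fix n
    show "finite (G n)" unfolding G_def by (rule finite_SigmaI[OF eIs(1)]) (use eIs(2) eJs(1) in blast)
    show "G n \<subseteq> Sigma I J" unfolding G_def using eIs(2) eJs(2) by blast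
  next
    fix m n :: nat assume mn: "m \<le> n"
    show "G m \<subseteq> G n" unfolding G_def
    proof
      fix p assume "p \<in> Sigma (EI m) (\<lambda>i. EJ i m)"
      then obtain i j where p: "p = (i, j)" "i \<in> EI m" "j \<in> EJ i m" by blast
      have "i \<in> I" using p(2) eIs(2) by blast
      then have "i \<in> EI n" "j \<in> EJ i n" using p eIs(3)[OF mn] eJs(3)[OF _ mn] by blast+
      then show "p \<in> Sigma (EI n) (\<lambda>i. EJ i n)" using p(1) by blast
    qed
  next
    fix p assume "p \<in> Sigma I J"
    then obtain i j where p: "p = (i, j)" "i \<in> I" "j \<in> J i" by blast
    obtain n1 where n1: "i \<in> EI n1" using exh_in[OF eI p(2)] by blast
    obtain n2 where n2: "j \<in> EJ i n2" using exh_in[OF eJ[OF p(2)] p(3)] by blast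
    have "i \<in> EI (max n1 n2)" using n1 eIs(3)[of n1 "max n1 n2"] by auto
    moreover have "j \<in> EJ i (max n1 n2)" using n2 eJs(3)[OF p(2), of n2 "max n1 n2"] by auto
    ultimately show "\<exists>n. p \<in> G n" unfolding G_def using p by blast
  qed
  define c where "c m n = (\<Sum>i\<in>EI m. \<Sum>j\<in>EJ i n. g i j)" for m n
  have "is_lub (range (\<lambda>n. c n n)) t"
  proof (rule double_lub[where c = c and t = "\<lambda>m. \<Sum>i\<in>EI m. s i"])
    fix m m' n n' :: nat assume mn: "m \<le> m'" "n \<le> n'"
    have "nle (c m n) (\<Sum>i\<in>EI m. \<Sum>j\<in>EJ i n'. g i j)"
      unfolding c_def
    proof (rule nle_sum_mono)
      fix i assume "i \<in> EI m"
      then have i: "i \<in> I" using eIs(2) by blast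
      show "nle (sum (g i) (EJ i n)) (sum (g i) (EJ i n'))"
        by (rule nle_sum_subset[OF eJs(1)[OF i] eJs(3)[OF i mn(2)]])
    qed
    moreover have "nle (\<Sum>i\<in>EI m. \<Sum>j\<in>EJ i n'. g i j) (c m' n')"
      unfolding c_def by (rule nle_sum_subset[OF eIs(1) eIs(3)[OF mn(1)]])
    ultimately show "nle (c m n) (c m' n')" by (rule nle_trans)
  next
    fix m
    have cm: "c m = (\<lambda>n. \<Sum>i\<in>EI m. sum (g i) (EJ i n))" by (rule ext) (simp add: c_def)
    have h1: "nle (sum (g i) (EJ i k)) (sum (g i) (EJ i l))" if ik: "i \<in> EI m" "k \<le> l" for i k l
    proof -
      have i: "i \<in> I" using ik eIs(2) by blast
      show ?thesis by (rule exh_mono_sum[OF eJ[OF i] ik(2)])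
    qed
    have h2: "is_lub (range (\<lambda>n. sum (g i) (EJ i n))) (s i)" if "i \<in> EI m" for i
    proof -
      have i: "i \<in> I" using that eIs(2) by blast
      show ?thesis by (rule exh_has_wsum[OF eJ[OF i], THEN iffD1, OF inner[OF i]])
    qed
    show "is_lub (range (c m)) (\<Sum>i\<in>EI m. s i)"
      unfolding cm using finite_sum_lub[where a = "\<lambda>i n. sum (g i) (EJ i n)", OF eIs(1) h1 h2] by simp
  next
    show "is_lub (range (\<lambda>m. \<Sum>i\<in>EI m. s i)) t" by (rule exh_has_wsum[OF eI, THEN iffD1, OF outer])
  qed
  moreover have "c n n = sum (\<lambda>p. g (fst p) (snd p)) (G n)" for n
  proof -
    have "\<forall>i\<in>EI n. finite (EJ i n)" using eIs(2) eJs(1) by blast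
    then show ?thesis unfolding c_def G_def using eIs(1) by (simp add: sum.Sigma split_beta)
  qed
  ultimately show ?thesis by (subst exh_has_wsum[OF eG]) simp
qed

end


lemma no_step_Term: "\<not> step (Term \<tau>) d w c"
  by (auto elim: step.cases)

lemma is_path_Cons: "is_path c (x # ts) \<longleftrightarrow> step c (fst x) (fst (snd x)) (snd (snd x)) \<and> is_path (snd (snd x)) ts"
  by (cases x) auto

lemma end_conf_Cons: "end_conf c (x # ts) = end_conf (snd (snd x)) ts"
  by (cases x) auto

lemma wgt_Nil: "wgt [] = 1" by (simp add: wgt_def)
lemma wgt_Cons: "wgt (x # ts) = fst (snd x) * wgt ts"
  by (cases x) (simp add: wgt_def)
lemma wgt_append: "wgt (p @ q) = wgt p * wgt q"
  by (simp add: wgt_def)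

lemma is_path_Term: "is_path (Term \<tau>) p \<longleftrightarrow> p = []"
  by (cases p) (auto simp: is_path_Cons no_step_Term)

lemma is_path_append: "is_path c (p @ q) \<longleftrightarrow> is_path c p \<and> is_path (end_conf c p) q"
  by (induction p arbitrary: c) (auto simp: is_path_Cons end_conf_Cons)

lemma end_conf_append: "end_conf c (p @ q) = end_conf (end_conf c p) q"
  by (induction p arbitrary: c) (auto simp: end_conf_Cons)

lemma tpaths_Term: "tpaths (Term \<tau>) = {[]}"
  by (auto simp: tpaths_def is_path_Term)

lemma tpaths_Conf: "tpaths (Conf C \<sigma>) =
   {x # ts | x ts. step (Conf C \<sigma>) (fst x) (fst (snd x)) (snd (snd x)) \<and> ts \<in> tpaths (snd (snd x))}"
proof safe
  fix p assume "p \<in> tpaths (Conf C \<sigma>)"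
  then show "\<exists>x ts. p = x # ts \<and> step (Conf C \<sigma>) (fst x) (fst (snd x)) (snd (snd x)) \<and> ts \<in> tpaths (snd (snd x))"
    by (cases p) (auto simp: tpaths_def is_path_Cons end_conf_Cons)
next
  fix x ts assume "step (Conf C \<sigma>) (fst x) (fst (snd x)) (snd (snd x))" "ts \<in> tpaths (snd (snd x))"
  then show "x # ts \<in> tpaths (Conf C \<sigma>)" by (auto simp: tpaths_def is_path_Cons end_conf_Cons)
qed

lemma tpaths_single_succ:
  assumes "\<And>d w c'. step (Conf C \<sigma>) d w c' \<longleftrightarrow> (d, w, c') = x"
  shows "tpaths (Conf C \<sigma>) = Cons x ` tpaths (snd (snd x))"
  unfolding tpaths_Conf using assms by fastforce

lemma tpaths_two_succ:
  assumes "\<And>d w c'. step (Conf C \<sigma>) d w c' \<longleftrightarrow> (d, w, c') = x \<or> (d, w, c') = y"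
  shows "tpaths (Conf C \<sigma>) = Cons x ` tpaths (snd (snd x)) \<union> Cons y ` tpaths (snd (snd y))"
  unfolding tpaths_Conf using assms by fastforce

lemma step_Assign: "step (Conf (Assign x E) \<sigma>) d w c' \<longleftrightarrow> (d, w, c') = (N, 1, Term (\<sigma>(x := E \<sigma>)))"
  by (auto elim: step.cases intro: step.intros)
lemma step_Weight: "step (Conf (Weight a) \<sigma>) d w c' \<longleftrightarrow> (d, w, c') = (N, a, Term \<sigma>)"
  by (auto elim: step.cases intro: step.intros)
lemma step_IfT: "\<phi> \<sigma> \<Longrightarrow> step (Conf (If \<phi> C1 C2) \<sigma>) d w c' \<longleftrightarrow> (d, w, c') = (N, 1, Conf C1 \<sigma>)"
  by (auto elim: step.cases intro: step.intros)
lemma step_IfF: "\<not> \<phi> \<sigma> \<Longrightarrow> step (Conf (If \<phi> C1 C2) \<sigma>) d w c' \<longleftrightarrow> (d, w, c') = (N, 1, Conf C2 \<sigma>)"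
  by (auto elim: step.cases intro: step.intros)
lemma step_WhileT: "\<phi> \<sigma> \<Longrightarrow> step (Conf (While \<phi> C) \<sigma>) d w c' \<longleftrightarrow> (d, w, c') = (N, 1, Conf (Seq C (While \<phi> C)) \<sigma>)"
  by (auto elim: step.cases intro: step.intros)
lemma step_WhileF: "\<not> \<phi> \<sigma> \<Longrightarrow> step (Conf (While \<phi> C) \<sigma>) d w c' \<longleftrightarrow> (d, w, c') = (N, 1, Term \<sigma>)"
  by (auto elim: step.cases intro: step.intros)
lemma step_Choice: "step (Conf (Choice C1 C2) \<sigma>) d w c' \<longleftrightarrow> (d, w, c') = (L, 1, Conf C1 \<sigma>) \<or> (d, w, c') = (R, 1, Conf C2 \<sigma>)"
  by (auto elim: step.cases intro: step.intros)

lemma step_Seq_cases: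
  assumes "step (Conf (Seq C1 C2) \<sigma>) d w c'"
  obtains C1' \<sigma>' where "c' = Conf (Seq C1' C2) \<sigma>'" "step (Conf C1 \<sigma>) d w (Conf C1' \<sigma>')"
    | \<sigma>' where "c' = Conf C2 \<sigma>'" "step (Conf C1 \<sigma>) d w (Term \<sigma>')"
  using assms by (cases rule: step.cases) auto

fun liftc :: "('v, 'val, 'w) prog \<Rightarrow> ('v, 'val, 'w) conf \<Rightarrow> ('v, 'val, 'w) conf" where
  "liftc C2 (Conf C s) = Conf (Seq C C2) s"
| "liftc C2 (Term \<tau>) = Conf C2 \<tau>"

definition liftp :: "('v, 'val, 'w) prog \<Rightarrow> ('v, 'val, 'w) path \<Rightarrow> ('v, 'val, 'w) path" where
  "liftp C2 p = map (\<lambda>x. (fst x, fst (snd x), liftc C2 (snd (snd x)))) p"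

lemma Seq_neq: "Seq C C2 \<noteq> C2"
proof
  assume "Seq C C2 = C2"
  then have "size (Seq C C2) = size C2" by simp
  then show False by simp
qed

lemma liftc_inj: "liftc C2 a = liftc C2 b \<Longrightarrow> a = b"
  by (cases a; cases b) (auto simp: Seq_neq Seq_neq[symmetric])

lemma liftp_Nil[simp]: "liftp C2 [] = []" by (simp add: liftp_def)
lemma liftp_Cons[simp]: "liftp C2 (x # p) = (fst x, fst (snd x), liftc C2 (snd (snd x))) # liftp C2 p"
  by (simp add: liftp_def)
lemma length_liftp[simp]: "length (liftp C2 p) = length p" by (simp add: liftp_def)

lemma wgt_liftp: "wgt (liftp C2 p) = wgt p"
  by (induction p) (auto simp: wgt_Cons wgt_Nil)

lemma end_conf_liftp: "end_conf (liftc C2 c) (liftp C2 p) = liftc C2 (end_conf c p)"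
  by (induction p arbitrary: c) (auto simp: end_conf_Cons)

lemma is_path_liftp: "is_path (Conf C1 \<sigma>) p \<Longrightarrow> is_path (Conf (Seq C1 C2) \<sigma>) (liftp C2 p)"
proof (induction p arbitrary: C1 \<sigma>)
  case Nil then show ?case by simp
next
  case (Cons x p)
  obtain d w c' where x: "x = (d, w, c')" by (cases x)
  have st: "step (Conf C1 \<sigma>) d w c'" and pp: "is_path c' p" using Cons.prems x by auto
  show ?case
  proof (cases c')
    case (Conf C' s)
    then show ?thesis using Cons.IH[of C' s] pp st x by (auto intro: step_seq1)
  next
    case (Term \<tau>)
    then have "p = []" using pp is_path_Term by blast
    then show ?thesis using Term st x by (auto intro: step_seq2)
  qed
qed

lemma tpaths_Seq_sub:
  assumes "p \<in> tpaths (Conf (Seq C1 C2) \<sigma>)"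
  shows "\<exists>p1 p2. p1 \<in> tpaths (Conf C1 \<sigma>) \<and> p2 \<in> tpaths (Conf C2 (last_state (Conf C1 \<sigma>) p1))
     \<and> p = liftp C2 p1 @ p2"
  using assms
proof (induction p arbitrary: C1 \<sigma>)
  case Nil then show ?case by (simp add: tpaths_def)
next
  case (Cons x p)
  obtain d w c' where x: "x = (d, w, c')" by (cases x)
  have st: "step (Conf (Seq C1 C2) \<sigma>) d w c'" and pp: "p \<in> tpaths c'"
    using Cons.prems x by (auto simp: tpaths_def)
  from st show ?case
  proof (cases rule: step_Seq_cases)
    case (1 C1' \<sigma>')
    obtain p1 p2 where p12: "p1 \<in> tpaths (Conf C1' \<sigma>')" "p2 \<in> tpaths (Conf C2 (last_state (Conf C1' \<sigma>') p1))"
      "p = liftp C2 p1 @ p2" using Cons.IH[of C1' \<sigma>'] pp 1 by blast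
    show ?thesis
    proof (intro exI conjI)
      show "x # p = liftp C2 ((d, w, Conf C1' \<sigma>') # p1) @ p2" using p12 1 x by simp
      show "(d, w, Conf C1' \<sigma>') # p1 \<in> tpaths (Conf C1 \<sigma>)" using p12(1) 1 by (simp add: tpaths_def)
      show "p2 \<in> tpaths (Conf C2 (last_state (Conf C1 \<sigma>) ((d, w, Conf C1' \<sigma>') # p1)))"
        using p12(2) by (simp add: last_state_def)
    qed
  next
    case (2 \<sigma>')
    show ?thesis
    proof (intro exI conjI)
      show "x # p = liftp C2 [(d, w, Term \<sigma>')] @ p" using 2 x by simp
      show "[(d, w, Term \<sigma>')] \<in> tpaths (Conf C1 \<sigma>)" using 2 by (simp add: tpaths_def)
      show "p \<in> tpaths (Conf C2 (last_state (Conf C1 \<sigma>) [(d, w, Term \<sigma>')]))"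
        using pp 2 by (simp add: last_state_def)
    qed
  qed
qed

lemma tpaths_end: "p \<in> tpaths c \<Longrightarrow> end_conf c p = Term (last_state c p)"
  by (auto simp: tpaths_def last_state_def)

definition seqmap :: "('v, 'val, 'w) prog \<Rightarrow> ('v, 'val, 'w) path \<times> ('v, 'val, 'w) path \<Rightarrow> ('v, 'val, 'w) path" where
  "seqmap C2 pq = liftp C2 (fst pq) @ snd pq"

definition seqdom :: "('v, 'val, 'w::monoid_mult) prog \<Rightarrow> ('v, 'val) state \<Rightarrow> ('v, 'val, 'w) prog
   \<Rightarrow> (('v, 'val, 'w) path \<times> ('v, 'val, 'w) path) set" where
  "seqdom C1 \<sigma> C2 = Sigma (tpaths (Conf C1 \<sigma>)) (\<lambda>p1. tpaths (Conf C2 (last_state (Conf C1 \<sigma>) p1)))"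

lemma tpaths_Seq: "tpaths (Conf (Seq C1 C2) \<sigma>) = seqmap C2 ` seqdom C1 \<sigma> C2"
proof
  show "tpaths (Conf (Seq C1 C2) \<sigma>) \<subseteq> seqmap C2 ` seqdom C1 \<sigma> C2"
  proof
    fix p assume "p \<in> tpaths (Conf (Seq C1 C2) \<sigma>)"
    then obtain p1 p2 where "p1 \<in> tpaths (Conf C1 \<sigma>)" "p2 \<in> tpaths (Conf C2 (last_state (Conf C1 \<sigma>) p1))"
      "p = liftp C2 p1 @ p2" using tpaths_Seq_sub by blast
    then show "p \<in> seqmap C2 ` seqdom C1 \<sigma> C2" unfolding seqmap_def seqdom_def
      by (intro rev_image_eqI[of "(p1, p2)"]) auto
  qed
next
  show "seqmap C2 ` seqdom C1 \<sigma> C2 \<subseteq> tpaths (Conf (Seq C1 C2) \<sigma>)"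
  proof
    fix p assume "p \<in> seqmap C2 ` seqdom C1 \<sigma> C2"
    then obtain p1 p2 where p1: "p1 \<in> tpaths (Conf C1 \<sigma>)"
      and p2: "p2 \<in> tpaths (Conf C2 (last_state (Conf C1 \<sigma>) p1))" and p: "p = liftp C2 p1 @ p2"
      unfolding seqmap_def seqdom_def by auto
    have e1: "end_conf (Conf C1 \<sigma>) p1 = Term (last_state (Conf C1 \<sigma>) p1)" using tpaths_end[OF p1] .
    have e2: "end_conf (Conf (Seq C1 C2) \<sigma>) (liftp C2 p1) = Conf C2 (last_state (Conf C1 \<sigma>) p1)"
      using end_conf_liftp[of C2 "Conf C1 \<sigma>" p1] e1 by simp
    have "is_path (Conf (Seq C1 C2) \<sigma>) (liftp C2 p1)" using p1 is_path_liftp by (auto simp: tpaths_def)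
    then show "p \<in> tpaths (Conf (Seq C1 C2) \<sigma>)" using p2 p e2
      by (auto simp: tpaths_def is_path_append end_conf_append)
  qed
qed

lemma liftp_app_inj:
  assumes "is_path c p1" "end_conf c p1 = Term \<tau>1" "is_path c q1" "end_conf c q1 = Term \<tau>2"
    "liftp C2 p1 @ p2 = liftp C2 q1 @ q2"
  shows "p1 = q1"
  using assms
proof (induction p1 arbitrary: c q1 \<tau>1)
  case Nil
  then have "c = Term \<tau>1" by simp
  then have "q1 = []" using Nil is_path_Term by blast
  then show ?case by simp
next
  case (Cons x p1)
  show ?case
  proof (cases q1)
    case Nil
    then have "c = Term \<tau>2" using Cons by simp
    then show ?thesis using Cons.prems(1) is_path_Term by blast
  next
    case (Cons y q1')
    have "liftc C2 (snd (snd x)) = liftc C2 (snd (snd y))" "fst x = fst y" "fst (snd x) = fst (snd y)"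
      using Cons.prems(5) Cons by auto
    then have xy: "x = y" using liftc_inj by (metis prod.expand)
    have "p1 = q1'"
    proof (rule Cons.IH)
      show "is_path (snd (snd x)) p1" using Cons.prems(1) by (simp add: is_path_Cons)
      show "end_conf (snd (snd x)) p1 = Term \<tau>1" using Cons.prems(2) by (simp add: end_conf_Cons)
      show "is_path (snd (snd x)) q1'" using Cons.prems(3) Cons xy by (simp add: is_path_Cons)
      show "end_conf (snd (snd x)) q1' = Term \<tau>2" using Cons.prems(4) Cons xy by (simp add: end_conf_Cons)
      show "liftp C2 p1 @ p2 = liftp C2 q1' @ q2" using Cons.prems(5) Cons xy by simp
    qed
    then show ?thesis using Cons xy by simp
  qed
qed

lemma seqmap_inj: "inj_on (seqmap C2) (seqdom C1 \<sigma> C2)"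
proof (rule inj_onI)
  fix a b assume a: "a \<in> seqdom C1 \<sigma> C2" and b: "b \<in> seqdom C1 \<sigma> C2" and eq: "seqmap C2 a = seqmap C2 b"
  have a1: "fst a \<in> tpaths (Conf C1 \<sigma>)" and b1: "fst b \<in> tpaths (Conf C1 \<sigma>)"
    using a b unfolding seqdom_def by auto
  have "fst a = fst b"
  proof (rule liftp_app_inj)
    show "is_path (Conf C1 \<sigma>) (fst a)" "is_path (Conf C1 \<sigma>) (fst b)" using a1 b1 by (auto simp: tpaths_def)
    show "end_conf (Conf C1 \<sigma>) (fst a) = Term (last_state (Conf C1 \<sigma>) (fst a))" using tpaths_end[OF a1] .
    show "end_conf (Conf C1 \<sigma>) (fst b) = Term (last_state (Conf C1 \<sigma>) (fst b))" using tpaths_end[OF b1] .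
    show "liftp C2 (fst a) @ snd a = liftp C2 (fst b) @ snd b" using eq unfolding seqmap_def .
  qed
  then show "a = b" using eq unfolding seqmap_def by (simp add: prod_eq_iff)
qed

lemma last_state_seqmap:
  assumes "p1 \<in> tpaths (Conf C1 \<sigma>)"
  shows "last_state (Conf (Seq C1 C2) \<sigma>) (liftp C2 p1 @ p2) = last_state (Conf C2 (last_state (Conf C1 \<sigma>) p1)) p2"
proof -
  have e1: "end_conf (Conf C1 \<sigma>) p1 = Term (last_state (Conf C1 \<sigma>) p1)" using tpaths_end[OF assms] .
  have e2: "end_conf (Conf (Seq C1 C2) \<sigma>) (liftp C2 p1) = Conf C2 (last_state (Conf C1 \<sigma>) p1)"
    using end_conf_liftp[of C2 "Conf C1 \<sigma>" p1] e1 by simp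
  show ?thesis by (simp add: last_state_def end_conf_append e2)
qed

definition succs :: "('v, 'val, 'w::monoid_mult) conf \<Rightarrow> (tag \<times> 'w \<times> ('v, 'val, 'w) conf) set" where
  "succs c = {x. step c (fst x) (fst (snd x)) (snd (snd x))}"

lemma finite_succs_Conf: "finite (succs (Conf C \<sigma>))"
proof (induction C arbitrary: \<sigma>)
  case (Assign x E) then show ?case unfolding succs_def
    by (rule finite_subset[of _ "{(N, 1, Term (\<sigma>(x := E \<sigma>)))}"]) (auto simp: step_Assign prod_eq_iff)
next
  case (Seq C1 C2)
  have "succs (Conf (Seq C1 C2) \<sigma>) \<subseteq> (\<lambda>x. (fst x, fst (snd x), liftc C2 (snd (snd x)))) ` succs (Conf C1 \<sigma>)"
  proof
    fix x assume "x \<in> succs (Conf (Seq C1 C2) \<sigma>)"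
    then have st: "step (Conf (Seq C1 C2) \<sigma>) (fst x) (fst (snd x)) (snd (snd x))" by (simp add: succs_def)
    then show "x \<in> (\<lambda>x. (fst x, fst (snd x), liftc C2 (snd (snd x)))) ` succs (Conf C1 \<sigma>)"
    proof (cases rule: step_Seq_cases)
      case (1 C1' \<sigma>')
      then show ?thesis unfolding succs_def
        by (intro rev_image_eqI[of "(fst x, fst (snd x), Conf C1' \<sigma>')"]) (auto simp: prod_eq_iff)
    next
      case (2 \<sigma>')
      then show ?thesis unfolding succs_def
        by (intro rev_image_eqI[of "(fst x, fst (snd x), Term \<sigma>')"]) (auto simp: prod_eq_iff)
    qed
  qed
  then show ?case using Seq.IH(1) finite_subset by blast
next
  case (If \<phi> C1 C2) show ?case unfolding succs_def
    by (rule finite_subset[of _ "{(N, 1, Conf C1 \<sigma>), (N, 1, Conf C2 \<sigma>)}"])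
       (cases "\<phi> \<sigma>"; auto simp: step_IfT step_IfF prod_eq_iff)+
next
  case (Choice C1 C2) show ?case unfolding succs_def
    by (rule finite_subset[of _ "{(L, 1, Conf C1 \<sigma>), (R, 1, Conf C2 \<sigma>)}"]) (auto simp: step_Choice prod_eq_iff)
next
  case (Weight a) then show ?case unfolding succs_def
    by (rule finite_subset[of _ "{(N, a, Term \<sigma>)}"]) (auto simp: step_Weight prod_eq_iff)
next
  case (While \<phi> C) show ?case unfolding succs_def
    by (rule finite_subset[of _ "{(N, 1, Conf (Seq C (While \<phi> C)) \<sigma>), (N, 1, Term \<sigma>)}"])
       (cases "\<phi> \<sigma>"; auto simp: step_WhileT step_WhileF prod_eq_iff)+
qed

lemma finite_succs: "finite (succs c)"
proof (cases c)
  case (Conf C \<sigma>) then show ?thesis using finite_succs_Conf by simp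
next
  case (Term \<tau>)
  then have "succs c = {}" by (simp add: succs_def no_step_Term)
  then show ?thesis by simp
qed

lemma finite_paths_n: "finite {p. is_path c p \<and> length p = n}"
proof (induction n arbitrary: c)
  case 0 then show ?case by simp
next
  case (Suc n)
  have "{p. is_path c p \<and> length p = Suc n} \<subseteq>
     (\<lambda>xt. fst xt # snd xt) ` Sigma (succs c) (\<lambda>x. {p. is_path (snd (snd x)) p \<and> length p = n})"
  proof
    fix p assume "p \<in> {p. is_path c p \<and> length p = Suc n}"
    then obtain x ts where "p = x # ts" "is_path c (x # ts)" "length ts = n" by (cases p) auto
    then show "p \<in> (\<lambda>xt. fst xt # snd xt) ` Sigma (succs c) (\<lambda>x. {p. is_path (snd (snd x)) p \<and> length p = n})"
      by (intro rev_image_eqI[of "(x, ts)"]) (auto simp: is_path_Cons succs_def)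
  qed
  moreover have "finite (Sigma (succs c) (\<lambda>x. {p. is_path (snd (snd x)) p \<and> length p = n}))"
    using finite_succs Suc.IH by (intro finite_SigmaI) auto
  ultimately show ?case using finite_subset by blast
qed

lemma countable_tpaths: "countable (tpaths c)"
proof -
  have "tpaths c \<subseteq> (\<Union>n. {p. is_path c p \<and> length p = n})" by (auto simp: tpaths_def)
  moreover have "countable (\<Union>n. {p. is_path c p \<and> length p = n})"
    using finite_paths_n by (intro countable_UN) (auto intro: countable_finite)
  ultimately show ?thesis using countable_subset by blast
qed



context wmod
begin

definition gg :: "(('v, 'val) state \<Rightarrow> 'm) \<Rightarrow> ('v, 'val, 'w) conf \<Rightarrow> ('v, 'val, 'w) path \<Rightarrow> 'm" where
  "gg f c \<pi> = act (wgt \<pi>) (f (last_state c \<pi>))"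

lemma gg_Cons: "gg f c0 ((d, 1, c) # \<pi>) = gg f c \<pi>"
  by (simp add: gg_def wgt_Cons last_state_def)

lemma has_wsum_Cons:
  assumes "has_wsum (gg f c) (tpaths c) s" "tpaths c0 = Cons (d, 1, c) ` tpaths c"
  shows "has_wsum (gg f c0) (tpaths c0) s"
proof -
  have "inj_on (Cons (d, 1, c)) (tpaths c)" by (rule inj_onI) simp
  moreover have "has_wsum (gg f c0 \<circ> Cons (d, 1, c)) (tpaths c) s"
    using assms(1) by (subst has_wsum_cong[of _ _ "gg f c"]) (auto simp: gg_Cons)
  ultimately show ?thesis unfolding assms(2) by (simp add: has_wsum_reindex)
qed

lemma gg_seq:
  assumes "p1 \<in> tpaths (Conf C1 \<sigma>)"
  shows "gg f (Conf (Seq C1 C2) \<sigma>) (seqmap C2 (p1, p2)) =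
    act (wgt p1) (gg f (Conf C2 (last_state (Conf C1 \<sigma>) p1)) p2)"
  using last_state_seqmap[OF assms]
  by (simp add: gg_def seqmap_def wgt_append wgt_liftp act_mult)

lemma seq_sum:
  assumes inner: "\<And>\<tau>. has_wsum (gg f (Conf C2 \<tau>)) (tpaths (Conf C2 \<tau>)) (Z \<tau>)"
    and outer: "has_wsum (gg Z (Conf C1 \<sigma>)) (tpaths (Conf C1 \<sigma>)) t"
  shows "has_wsum (gg f (Conf (Seq C1 C2) \<sigma>)) (tpaths (Conf (Seq C1 C2) \<sigma>)) t"
proof -
  let ?ls = "last_state (Conf C1 \<sigma>)"
  have "has_wsum (\<lambda>p. act (wgt (fst p)) (gg f (Conf C2 (?ls (fst p))) (snd p))) (seqdom C1 \<sigma> C2) t"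
    unfolding seqdom_def
  proof (rule has_wsum_Sigma[where s = "gg Z (Conf C1 \<sigma>)"])
    show "countable (tpaths (Conf C1 \<sigma>))" by (rule countable_tpaths)
    show "countable (tpaths (Conf C2 (?ls p1)))" for p1 by (rule countable_tpaths)
    show "has_wsum (\<lambda>p2. act (wgt p1) (gg f (Conf C2 (?ls p1)) p2)) (tpaths (Conf C2 (?ls p1)))
        (gg Z (Conf C1 \<sigma>) p1)" for p1
      unfolding gg_def[of Z] by (rule has_wsum_act[OF countable_tpaths inner])
    show "has_wsum (gg Z (Conf C1 \<sigma>)) (tpaths (Conf C1 \<sigma>)) t" by (rule outer)
  qed
  then have "has_wsum (gg f (Conf (Seq C1 C2) \<sigma>) \<circ> seqmap C2) (seqdom C1 \<sigma> C2) t"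
    by (subst has_wsum_cong[of _ _ "\<lambda>p. act (wgt (fst p)) (gg f (Conf C2 (?ls (fst p))) (snd p))"])
       (auto simp: seqdom_def gg_seq[symmetric])
  then show ?thesis unfolding tpaths_Seq by (simp add: has_wsum_reindex seqmap_inj)
qed

end


context wmod
begin

lemma tpaths_WhileT: "\<phi> \<sigma> \<Longrightarrow> tpaths (Conf (While \<phi> C) \<sigma>) =
    Cons (N, 1, Conf (Seq C (While \<phi> C)) \<sigma>) ` tpaths (Conf (Seq C (While \<phi> C)) \<sigma>)"
  by (rule tpaths_single_succ[where x = "(N, 1, Conf (Seq C (While \<phi> C)) \<sigma>)", simplified])
     (simp add: step_WhileT)

lemma tpaths_WhileF: "\<not> \<phi> \<sigma> \<Longrightarrow> tpaths (Conf (While \<phi> C) \<sigma>) = {[(N, 1, Term \<sigma>)]}"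
  by (subst tpaths_single_succ[where x = "(N, 1, Term \<sigma>)"]) (auto simp: step_WhileF tpaths_Term)

lemma has_wsum_Cons_img:
  assumes "has_wsum (gg f c) (tpaths c) s"
  shows "has_wsum (gg f c0) (Cons (d, 1, c) ` tpaths c) s"
proof -
  have "inj_on (Cons (d, 1, c)) (tpaths c)" by (rule inj_onI) simp
  moreover have "has_wsum (gg f c0 \<circ> Cons (d, 1, c)) (tpaths c) s"
    using assms(1) by (subst has_wsum_cong[of _ _ "gg f c"]) (auto simp: gg_Cons)
  ultimately show ?thesis by (simp add: has_wsum_reindex)
qed

lemma gg_single: "gg f c [(N, 1, Term \<sigma>)] = f \<sigma>"
  by (simp add: gg_def wgt_Cons wgt_Nil last_state_def act_one)

lemma while_case:
  assumes IH: "\<And>\<sigma> f. has_wsum (gg f (Conf C \<sigma>)) (tpaths (Conf C \<sigma>)) (wp act C f \<sigma>)"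
  shows "has_wsum (gg f (Conf (While \<phi> C) \<sigma>)) (tpaths (Conf (While \<phi> C) \<sigma>)) (wp act (While \<phi> C) f \<sigma>)"
proof -
  let ?W = "While \<phi> C"
  define X where "X \<sigma> = (THE s. has_wsum (gg f (Conf ?W \<sigma>)) (tpaths (Conf ?W \<sigma>)) s)" for \<sigma>
  have HX: "has_wsum (gg f (Conf ?W \<sigma>)) (tpaths (Conf ?W \<sigma>)) (X \<sigma>)" for \<sigma>
  proof -
    obtain s where s: "has_wsum (gg f (Conf ?W \<sigma>)) (tpaths (Conf ?W \<sigma>)) s"
      using has_wsum_exists[OF countable_tpaths] by blast
    show ?thesis unfolding X_def by (rule theI[of _ s]) (use s has_wsum_unique in auto)
  qed
  define \<Phi> where "\<Phi> = (\<lambda>X \<sigma>. guard (\<lambda>s. \<not> \<phi> s) f \<sigma> + guard \<phi> (wp act C X) \<sigma>)"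
  have wpW: "wp act ?W f = nlfp \<Phi>" by (simp add: \<Phi>_def)
  have Phi_eq: "\<Phi> Y \<sigma> = (if \<phi> \<sigma> then wp act C Y \<sigma> else f \<sigma>)" for Y \<sigma>
    by (simp add: \<Phi>_def guard_def)
  have fixp: "\<Phi> X = X"
  proof
    fix \<sigma>
    show "\<Phi> X \<sigma> = X \<sigma>"
    proof (cases "\<phi> \<sigma>")
      case False
      have "has_wsum (gg f (Conf ?W \<sigma>)) (tpaths (Conf ?W \<sigma>)) (f \<sigma>)"
        using has_wsum_single[of "gg f (Conf ?W \<sigma>)" "[(N, 1, Term \<sigma>)]"]
        by (simp add: tpaths_WhileF[of \<phi> \<sigma> C, OF False] gg_single)
      then have "X \<sigma> = f \<sigma>" using HX has_wsum_unique by blast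
      then show ?thesis using False Phi_eq by simp
    next
      case True
      have "has_wsum (gg f (Conf (Seq C ?W) \<sigma>)) (tpaths (Conf (Seq C ?W) \<sigma>)) (wp act C X \<sigma>)"
        by (rule seq_sum[OF HX IH])
      then have "has_wsum (gg f (Conf ?W \<sigma>)) (tpaths (Conf ?W \<sigma>)) (wp act C X \<sigma>)"
        by (rule has_wsum_Cons[OF _ tpaths_WhileT[of \<phi> \<sigma> C, OF True]])
      then have "X \<sigma> = wp act C X \<sigma>" using HX has_wsum_unique by blast
      then show ?thesis using True Phi_eq by simp
    qed
  qed
  have least: "nle (X \<sigma>) (Y \<sigma>)" if Y: "\<Phi> Y = Y" for Y \<sigma>
  proof -
    have Yeq: "Y \<sigma> = (if \<phi> \<sigma> then wp act C Y \<sigma> else f \<sigma>)" for \<sigma>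
      using Phi_eq[of Y \<sigma>] Y by simp
    have main: "\<forall>\<sigma> F. finite F \<longrightarrow> F \<subseteq> tpaths (Conf ?W \<sigma>) \<longrightarrow> (\<forall>\<pi>\<in>F. length \<pi> < n) \<longrightarrow>
        nle (sum (gg f (Conf ?W \<sigma>)) F) (Y \<sigma>)" for n
    proof (induction n)
      case 0 then show ?case by (auto simp: nle_zero)
    next
      case (Suc n)
      show ?case
      proof (intro allI impI)
        fix \<sigma> F assume fin: "finite F" and sub: "F \<subseteq> tpaths (Conf ?W \<sigma>)" and len: "\<forall>\<pi>\<in>F. length \<pi> < Suc n"
        show "nle (sum (gg f (Conf ?W \<sigma>)) F) (Y \<sigma>)"
        proof (cases "\<phi> \<sigma>")
          case False
          have "nle (sum (gg f (Conf ?W \<sigma>)) F) (sum (gg f (Conf ?W \<sigma>)) {[(N, 1, Term \<sigma>)]})"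
            using sub by (intro nle_sum_subset) (auto simp: tpaths_WhileF[of \<phi> \<sigma> C, OF False])
          then show ?thesis using False Yeq[of \<sigma>] by (simp add: gg_single)
        next
          case True
          let ?x0 = "(N, 1, Conf (Seq C ?W) \<sigma>) :: tag \<times> 'w \<times> _"
          let ?G2 = "gg f (Conf (Seq C ?W) \<sigma>)"
          let ?ls = "last_state (Conf C \<sigma>)"
          define F' where "F' = tl ` F"
          have FF: "F = Cons ?x0 ` F'"
          proof -
            have eq: "?x0 # tl \<pi> = \<pi>" if "\<pi> \<in> F" for \<pi>
            proof -
              have "\<pi> \<in> Cons ?x0 ` tpaths (Conf (Seq C ?W) \<sigma>)"
                using that sub tpaths_WhileT[of \<phi> \<sigma> C, OF True] by blast
              then show ?thesis by force
            qed
            have "(\<lambda>\<pi>. ?x0 # tl \<pi>) ` F = (\<lambda>\<pi>. \<pi>) ` F" by (rule image_cong[OF refl]) (rule eq)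
            then show ?thesis by (simp add: F'_def image_image)
          qed
          have finF': "finite F'" unfolding F'_def using fin by simp
          have subF': "F' \<subseteq> tpaths (Conf (Seq C ?W) \<sigma>)"
            using sub FF tpaths_WhileT[of \<phi> \<sigma> C, OF True] by auto
          have lenF': "length \<pi> < n" if "\<pi> \<in> F'" for \<pi>
            using that len FF by auto
          have s1: "sum (gg f (Conf ?W \<sigma>)) F = sum ?G2 F'"
            unfolding FF by (subst sum.reindex) (auto simp: gg_Cons inj_on_def)
          obtain Fp where Fp: "Fp \<subseteq> seqdom C \<sigma> ?W" "finite Fp" "F' = seqmap ?W ` Fp"
            using finF' subF' unfolding tpaths_Seq by (meson finite_subset_image)
          have injFp: "inj_on (seqmap ?W) Fp" using seqmap_inj inj_on_subset Fp(1) by blast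
          have s2: "sum ?G2 F' = sum (?G2 \<circ> seqmap ?W) Fp"
            unfolding Fp(3) using injFp by (rule sum.reindex)
          define P1 where "P1 = fst ` Fp"
          define K where "K p1 = {p2. (p1, p2) \<in> Fp}" for p1
          have FpS: "Fp = Sigma P1 K" unfolding P1_def K_def by force
          have finP1: "finite P1" unfolding P1_def using Fp(2) by simp
          have finK: "finite (K p1)" for p1
          proof -
            have "K p1 \<subseteq> snd ` Fp" unfolding K_def by force
            then show ?thesis using Fp(2) finite_subset by blast
          qed
          have P1sub: "P1 \<subseteq> tpaths (Conf C \<sigma>)" using Fp(1) unfolding P1_def seqdom_def by auto
          have Ksub: "K p1 \<subseteq> tpaths (Conf ?W (?ls p1))" for p1
            using Fp(1) unfolding K_def seqdom_def by auto
          have Klen: "\<forall>\<pi>\<in>K p1. length \<pi> < n" for p1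
          proof
            fix p2 assume "p2 \<in> K p1"
            then have "seqmap ?W (p1, p2) \<in> F'" unfolding K_def Fp(3) by blast
            then have "length (seqmap ?W (p1, p2)) < n" by (rule lenF')
            then show "length p2 < n" by (simp add: seqmap_def)
          qed
          have s3: "sum (?G2 \<circ> seqmap ?W) Fp =
              (\<Sum>p1\<in>P1. act (wgt p1) (sum (gg f (Conf ?W (?ls p1))) (K p1)))"
          proof -
            have "sum (?G2 \<circ> seqmap ?W) Fp = (\<Sum>p1\<in>P1. \<Sum>p2\<in>K p1. ?G2 (seqmap ?W (p1, p2)))"
              unfolding FpS using finP1 finK by (subst sum.Sigma) (auto simp: split_beta)
            also have "\<dots> = (\<Sum>p1\<in>P1. \<Sum>p2\<in>K p1. act (wgt p1) (gg f (Conf ?W (?ls p1)) p2))"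
              using P1sub by (intro sum.cong refl) (auto simp: gg_seq)
            also have "\<dots> = (\<Sum>p1\<in>P1. act (wgt p1) (sum (gg f (Conf ?W (?ls p1))) (K p1)))"
              by (simp add: act_sum)
            finally show ?thesis .
          qed
          have "nle (\<Sum>p1\<in>P1. act (wgt p1) (sum (gg f (Conf ?W (?ls p1))) (K p1)))
                    (\<Sum>p1\<in>P1. gg Y (Conf C \<sigma>) p1)"
          proof (rule nle_sum_mono)
            fix p1 assume "p1 \<in> P1"
            have "nle (sum (gg f (Conf ?W (?ls p1))) (K p1)) (Y (?ls p1))"
              by (rule Suc.IH[rule_format, OF finK Ksub]) (use Klen in blast)
            then show "nle (act (wgt p1) (sum (gg f (Conf ?W (?ls p1))) (K p1))) (gg Y (Conf C \<sigma>) p1)"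
              unfolding gg_def by (rule act_mono)
          qed
          moreover have "nle (\<Sum>p1\<in>P1. gg Y (Conf C \<sigma>) p1) (wp act C Y \<sigma>)"
            by (rule has_wsum_upper[OF IH finP1 P1sub])
          ultimately have "nle (sum (gg f (Conf ?W \<sigma>)) F) (wp act C Y \<sigma>)"
            unfolding s1 s2 s3 by (rule nle_trans)
          then show ?thesis using True Yeq[of \<sigma>] by simp
        qed
      qed
    qed
    show ?thesis
    proof (rule has_wsum_least[OF _ HX])
      fix F assume "finite F" "F \<subseteq> tpaths (Conf ?W \<sigma>)"
      moreover have "\<forall>\<pi>\<in>F. length \<pi> < Suc (sum length F)"
      proof
        fix \<pi> assume "\<pi> \<in> F"
        then have "length \<pi> \<le> sum length F" using \<open>finite F\<close> by (intro member_le_sum) auto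
        then show "length \<pi> < Suc (sum length F)" by simp
      qed
      ultimately show "nle (sum (gg f (Conf ?W \<sigma>)) F) (Y \<sigma>)" using main[rule_format] by blast
    qed
  qed
  have "nlfp \<Phi> = X"
    unfolding nlfp_def
  proof (rule the_equality)
    show "\<Phi> X = X \<and> (\<forall>Y. \<Phi> Y = Y \<longrightarrow> (\<forall>s. nle (X s) (Y s)))" using fixp least by blast
  next
    fix Z assume Z: "\<Phi> Z = Z \<and> (\<forall>Y. \<Phi> Y = Y \<longrightarrow> (\<forall>s. nle (Z s) (Y s)))"
    show "Z = X"
    proof
      fix s
      have "nle (Z s) (X s)" using Z fixp by blast
      moreover have "nle (X s) (Z s)" using least[of Z s] Z by blast
      ultimately show "Z s = X s" by (rule antisym)
    qed
  qed
  then show ?thesis using HX wpW by simp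
qed

lemma main:
  "has_wsum (gg f (Conf C \<sigma>)) (tpaths (Conf C \<sigma>)) (wp act C f \<sigma>)"
proof (induction C arbitrary: \<sigma> f)
  case (Assign x E)
  have "tpaths (Conf (Assign x E) \<sigma>) = {[(N, 1::'w, Term (\<sigma>(x := E \<sigma>)))]}"
    by (subst tpaths_single_succ[where x = "(N, 1, Term (\<sigma>(x := E \<sigma>)))"]) (auto simp: step_Assign tpaths_Term)
  moreover have "gg f (Conf (Assign x E) \<sigma>) [(N, 1::'w, Term (\<sigma>(x := E \<sigma>)))] = f (\<sigma>(x := E \<sigma>))"
    by (rule gg_single)
  ultimately show ?case using has_wsum_single[of "gg f (Conf (Assign x E) \<sigma>)" "[(N, 1, Term (\<sigma>(x := E \<sigma>)))]"] by simp
next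
  case (Seq C1 C2)
  show ?case by simp (rule seq_sum[OF Seq.IH(2) Seq.IH(1)])
next
  case (If \<phi> C1 C2)
  show ?case
  proof (cases "\<phi> \<sigma>")
    case True
    have "tpaths (Conf (If \<phi> C1 C2) \<sigma>) = Cons (N, 1, Conf C1 \<sigma>) ` tpaths (Conf C1 \<sigma>)"
      by (rule tpaths_single_succ[where x = "(N, 1, Conf C1 \<sigma>)", simplified]) (simp add: step_IfT[of \<phi> \<sigma>, OF True])
    from has_wsum_Cons[OF If.IH(1) this] show ?thesis using True by (simp add: guard_def)
  next
    case False
    have "tpaths (Conf (If \<phi> C1 C2) \<sigma>) = Cons (N, 1, Conf C2 \<sigma>) ` tpaths (Conf C2 \<sigma>)"
      by (rule tpaths_single_succ[where x = "(N, 1, Conf C2 \<sigma>)", simplified]) (simp add: step_IfF[of \<phi> \<sigma>, OF False])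
    from has_wsum_Cons[OF If.IH(2) this] show ?thesis using False by (simp add: guard_def)
  qed
next
  case (Choice C1 C2)
  have T: "tpaths (Conf (Choice C1 C2) \<sigma>) = Cons (L, 1, Conf C1 \<sigma>) ` tpaths (Conf C1 \<sigma>) \<union> Cons (R, 1, Conf C2 \<sigma>) ` tpaths (Conf C2 \<sigma>)"
    by (rule tpaths_two_succ[where x = "(L, 1, Conf C1 \<sigma>)" and y = "(R, 1, Conf C2 \<sigma>)", simplified])
       (simp add: step_Choice)
  have h1: "has_wsum (gg f (Conf (Choice C1 C2) \<sigma>)) (Cons (L, 1, Conf C1 \<sigma>) ` tpaths (Conf C1 \<sigma>)) (wp act C1 f \<sigma>)"
    by (rule has_wsum_Cons_img[OF Choice.IH(1)])
  have h2: "has_wsum (gg f (Conf (Choice C1 C2) \<sigma>)) (Cons (R, 1, Conf C2 \<sigma>) ` tpaths (Conf C2 \<sigma>)) (wp act C2 f \<sigma>)"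
    by (rule has_wsum_Cons_img[OF Choice.IH(2)])
  have "has_wsum (gg f (Conf (Choice C1 C2) \<sigma>)) (tpaths (Conf (Choice C1 C2) \<sigma>)) (wp act C1 f \<sigma> + wp act C2 f \<sigma>)"
    unfolding T by (rule has_wsum_union[OF _ _ _ h1 h2]) (auto intro: countable_tpaths)
  then show ?case by simp
next
  case (Weight a)
  have "tpaths (Conf (Weight a) \<sigma>) = {[(N, a, Term \<sigma>)]}"
    by (subst tpaths_single_succ[where x = "(N, a, Term \<sigma>)"]) (auto simp: step_Weight tpaths_Term)
  moreover have "gg f (Conf (Weight a) \<sigma>) [(N, a, Term \<sigma>)] = act a (f \<sigma>)"
    by (simp add: gg_def wgt_Cons wgt_Nil last_state_def)
  ultimately show ?case using has_wsum_single[of "gg f (Conf (Weight a) \<sigma>)" "[(N, a, Term \<sigma>)]"] by simp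
next
  case (While \<phi> C)
  then show ?case by (rule while_case)
qed

end

theorem mainTheorem3:
  fixes act :: "'w::monoid_mult \<Rightarrow> 'm::comm_monoid_add \<Rightarrow> 'm"
    and C :: "('v, 'val, 'w) prog"
    and \<sigma> :: "('v, 'val) state"
    and f :: "('v, 'val) state \<Rightarrow> 'm"
  assumes "is_module act"
    and "omega_continuous act"
  shows "has_wsum (\<lambda>\<pi>. act (wgt \<pi>) (f (last_state (Conf C \<sigma>) \<pi>)))
           (tpaths (Conf C \<sigma>)) (wp act C f \<sigma>)"
proof -
  interpret wmod act using assms by (rule wmod.intro)
  have "has_wsum (gg f (Conf C \<sigma>)) (tpaths (Conf C \<sigma>)) (wp act C f \<sigma>)" by (rule main)
  then show ?thesis unfolding gg_def .
qed

end
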